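(* Suppose $\vec \theta \in \mathbb R^d$ and $\epsilon > 0$ have the property that for any pair of vectors $\vec x, \vec y \in (\mathbb Z_g)^k$, there are $z \in \mathbb Z$ and $\epsilon_1$ with $|\epsilon_1| < \epsilon$ such that $\vec \theta \cdot Z(\vec x) - \vec \theta \cdot Z(\vec y) = 2 \pi z + \epsilon_1$. Then for any index $(\{i,j\},a)$, there are $z \in \mathbb Z$ and $\epsilon_3$ with $|\epsilon_3| < 2 \epsilon$ such that $\theta_{\{i,j\},a} - \epsilon_3 = \frac{2 \pi}{g} z$.
   Context: Let $g\ge 2$, $k\ge 2$ be integers, $\mathbb Z_g$ the integers mod $g$, and $d=\binom{k}{2}(g-1)$. Index the coordinates of $\mathbb R^d$ by pairs $(\{i,j\},a)$ with $1\le i<j\le k$ and $a\in\mathbb Z_g\setminus\{0\}$. Define $Z:(\mathbb Z_g)^k\to\mathbb R^d$ by $[Z(\vec x)]_{\{i,j\},a}=1-1/g$ if $x_i-x_j=a$ and $-1/g$ otherwise. *)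

theory Defs
  imports Complex_Main
begin

text \<open>Coordinates of R^d: triples (i,j,a) with 1 \<le> i < j \<le> k and a \<in> Z_g - {0},
  where Z_g is represented by {0..<g}, so a ranges over {1..<g}.\<close>
definition idx :: "nat \<Rightarrow> nat \<Rightarrow> (nat \<times> nat \<times> nat) set" where
  "idx k g = {(i, j, a). 1 \<le> i \<and> i < j \<and> j \<le> k \<and> 1 \<le> a \<and> a < g}"

definition zg_vecs :: "nat \<Rightarrow> nat \<Rightarrow> (nat \<Rightarrow> int) set" where
  "zg_vecs k g = {x. \<forall>i. (i \<in> {1..k} \<longrightarrow> x i \<in> {0..<int g}) \<and> (i \<notin> {1..k} \<longrightarrow> x i = 0)}"

definition Zmap :: "nat \<Rightarrow> (nat \<Rightarrow> int) \<Rightarrow> nat \<times> nat \<times> nat \<Rightarrow> real" where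
  "Zmap g x p = (case p of (i, j, a) \<Rightarrow>
     if (x i - x j) mod int g = int a then 1 - 1 / real g else - 1 / real g)"

definition dotZ :: "nat \<Rightarrow> nat \<Rightarrow> (nat \<times> nat \<times> nat \<Rightarrow> real) \<Rightarrow> (nat \<Rightarrow> int) \<Rightarrow> real" where
  "dotZ k g \<theta> x = (\<Sum>p\<in>idx k g. \<theta> p * Zmap g x p)"

end

theory Submission
  imports Defs
begin

lemma shift1:
  fixes n c :: int assumes "n > 0"
  shows "(\<Sum>t\<in>{0..<n}. h ((c - t) mod n)) = (\<Sum>t\<in>{0..<n}. (h t :: real))"
proof (rule sum.reindex_bij_witness[where i="\<lambda>b. (c - b) mod n" and j="\<lambda>a. (c - a) mod n"])
  fix a assume "a \<in> {0..<n}"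
  then show "(c - (c - a) mod n) mod n = a"
    by (subst mod_diff_right_eq) simp
next
  fix a assume "a \<in> {0..<n}"
  then show "(c - a) mod n \<in> {0..<n}" using assms by simp
next
  fix a assume "a \<in> {0..<n}"
  then show "(c - (c - a) mod n) mod n = a"
    by (subst mod_diff_right_eq) simp
next
  fix a assume "a \<in> {0..<n}"
  then show "(c - a) mod n \<in> {0..<n}" using assms by simp
qed simp

lemma shift2:
  fixes n c :: int assumes "n > 0"
  shows "(\<Sum>t\<in>{0..<n}. h ((t - c) mod n)) = (\<Sum>t\<in>{0..<n}. (h t :: real))"
proof (rule sum.reindex_bij_witness[where i="\<lambda>b. (b + c) mod n" and j="\<lambda>a. (a - c) mod n"])
  fix a assume "a \<in> {0..<n}"
  then show "((a - c) mod n + c) mod n = a"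
    by (subst mod_add_left_eq) simp
next
  fix a assume "a \<in> {0..<n}"
  then show "(a - c) mod n \<in> {0..<n}" using assms by simp
next
  fix a assume "a \<in> {0..<n}"
  then show "((a + c) mod n - c) mod n = a"
    by (subst mod_diff_left_eq) simp
next
  fix a assume "a \<in> {0..<n}"
  then show "(a + c) mod n \<in> {0..<n}" using assms by simp
qed simp

lemma finite_idx: "finite (idx k g)"
proof -
  have "idx k g \<subseteq> {1..k} \<times> {1..k} \<times> {1..<g}" unfolding idx_def by auto
  thus ?thesis by (rule finite_subset) auto
qed

definition xv :: "nat \<Rightarrow> nat \<Rightarrow> nat \<Rightarrow> nat \<Rightarrow> int \<Rightarrow> nat \<Rightarrow> int" where
  "xv k i j a t = (\<lambda>l. if l = i then int a else if l = j then 0 else if l \<in> {1..k} then t else 0)"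

definition ind :: "nat \<Rightarrow> (nat \<Rightarrow> int) \<Rightarrow> nat \<times> nat \<times> nat \<Rightarrow> real" where
  "ind g x q = (case q of (i, j, a) \<Rightarrow> if (x i - x j) mod int g = int a then 1 else 0)"

lemma Zmap_ind: "Zmap g x q = ind g x q - 1 / real g"
  unfolding Zmap_def ind_def by (cases q) auto

lemma dotZ_diff:
  "dotZ k g \<theta> x - dotZ k g \<theta> y = (\<Sum>q\<in>idx k g. \<theta> q * (ind g x q - ind g y q))"
  unfolding dotZ_def Zmap_ind by (simp add: sum_subtractf[symmetric] algebra_simps)

lemma xv_in:
  assumes "(i, j, a) \<in> idx k g" "0 \<le> t" "t < int g"
  shows "xv k i j a t \<in> zg_vecs k g" "xv k i j 0 t \<in> zg_vecs k g"
  using assms unfolding xv_def zg_vecs_def idx_def by auto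

lemma key:
  assumes p: "(i, j, a) \<in> idx k g" and q: "(i', j', b) \<in> idx k g"
  shows "(\<Sum>t\<in>{0..<int g}. ind g (xv k i j a t) (i', j', b) - ind g (xv k i j 0 t) (i', j', b))
         = (if (i', j', b) = (i, j, a) then real g else 0)"
proof -
  from p have ij: "1 \<le> i" "i < j" "j \<le> k" "1 \<le> a" "a < g" unfolding idx_def by auto
  from q have ij': "1 \<le> i'" "i' < j'" "j' \<le> k" "1 \<le> b" "b < g" unfolding idx_def by auto
  have g0: "int g > 0" using ij by simp
  consider "i' = i \<and> j' = j" | "i' = i \<and> j' \<noteq> j" | "j' = i" | "i' \<noteq> i \<and> j' \<noteq> i"
    by blast
  then show ?thesis
  proof cases
    case 1
    have "\<And>t. ind g (xv k i j a t) (i', j', b) - ind g (xv k i j 0 t) (i', j', b)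
          = (if b = a then 1 else 0)"
      using 1 ij ij' by (auto simp: ind_def xv_def)
    then show ?thesis using 1 g0 by simp
  next
    case 2
    have x1: "\<And>t. ind g (xv k i j a t) (i', j', b) = (\<lambda>s. if s = int b then 1 else 0) ((int a - t) mod int g)"
      using 2 ij ij' by (auto simp: ind_def xv_def)
    have x2: "\<And>t. ind g (xv k i j 0 t) (i', j', b) = (\<lambda>s. if s = int b then 1 else 0) ((0 - t) mod int g)"
      using 2 ij ij' by (auto simp: ind_def xv_def)
    show ?thesis unfolding sum_subtractf x1 x2 using 2 shift1[OF g0, of "\<lambda>s. if s = int b then 1 else 0" "int a"]
        shift1[OF g0, of "\<lambda>s. if s = int b then 1 else 0" 0] by simp
  next
    case 3
    have x1: "\<And>t. ind g (xv k i j a t) (i', j', b) = (\<lambda>s. if s = int b then 1 else 0) ((t - int a) mod int g)"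
      using 3 ij ij' by (auto simp: ind_def xv_def)
    have x2: "\<And>t. ind g (xv k i j 0 t) (i', j', b) = (\<lambda>s. if s = int b then 1 else 0) ((t - 0) mod int g)"
      using 3 ij ij' by (auto simp: ind_def xv_def)
    show ?thesis unfolding sum_subtractf x1 x2 using 3 ij shift2[OF g0, of "\<lambda>s. if s = int b then 1 else 0" "int a"]
        shift2[OF g0, of "\<lambda>s. if s = int b then 1 else 0" 0] by simp
  next
    case 4
    have "\<And>t. ind g (xv k i j a t) (i', j', b) - ind g (xv k i j 0 t) (i', j', b) = 0"
      using 4 ij ij' by (auto simp: ind_def xv_def)
    then show ?thesis using 4 by auto
  qed
qed

lemma sum_identity:
  assumes p: "p \<in> idx k g"
  shows "(\<Sum>t\<in>{0..<int g}. dotZ k g \<theta> (xv k (fst p) (fst (snd p)) (snd (snd p)) t)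
                           - dotZ k g \<theta> (xv k (fst p) (fst (snd p)) 0 t)) = real g * \<theta> p"
proof -
  obtain i j a where pe: "p = (i, j, a)" by (cases p) auto
  have "(\<Sum>t\<in>{0..<int g}. dotZ k g \<theta> (xv k i j a t) - dotZ k g \<theta> (xv k i j 0 t))
      = (\<Sum>t\<in>{0..<int g}. \<Sum>q\<in>idx k g. \<theta> q * (ind g (xv k i j a t) q - ind g (xv k i j 0 t) q))"
    by (simp add: dotZ_diff)
  also have "\<dots> = (\<Sum>q\<in>idx k g. \<theta> q * (\<Sum>t\<in>{0..<int g}. ind g (xv k i j a t) q - ind g (xv k i j 0 t) q))"
    by (subst sum.swap) (simp add: sum_distrib_left)
  also have "\<dots> = (\<Sum>q\<in>idx k g. \<theta> q * (if q = p then real g else 0))"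
  proof (rule sum.cong[OF refl])
    fix q assume "q \<in> idx k g"
    then obtain i' j' b where "q = (i', j', b)" "(i', j', b) \<in> idx k g" by (cases q) auto
    then show "\<theta> q * (\<Sum>t\<in>{0..<int g}. ind g (xv k i j a t) q - ind g (xv k i j 0 t) q)
             = \<theta> q * (if q = p then real g else 0)"
      using key[of i j a k g i' j' b] p pe by simp
  qed
  also have "\<dots> = real g * \<theta> p"
    using p finite_idx[of k g] by (simp add: if_distrib[of "\<lambda>x. _ * x"] sum.delta' mult.commute cong: if_cong)
  finally show ?thesis using pe by simp
qed

theorem corollary2p2:
  fixes g k :: nat and \<theta> :: "nat \<times> nat \<times> nat \<Rightarrow> real" and \<epsilon> :: real
  assumes "g \<ge> 2" and "k \<ge> 2" and "\<epsilon> > 0"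
    and "\<forall>x\<in>zg_vecs k g. \<forall>y\<in>zg_vecs k g. \<exists>z::int. \<exists>\<epsilon>1::real.
           \<bar>\<epsilon>1\<bar> < \<epsilon> \<and> dotZ k g \<theta> x - dotZ k g \<theta> y = 2 * pi * real_of_int z + \<epsilon>1"
  shows "\<forall>p\<in>idx k g. \<exists>z::int. \<exists>\<epsilon>3::real.
           \<bar>\<epsilon>3\<bar> < 2 * \<epsilon> \<and> \<theta> p - \<epsilon>3 = 2 * pi / real g * real_of_int z"
proof
  fix p assume p: "p \<in> idx k g"
  obtain i j a where pe: "p = (i, j, a)" by (cases p) auto
  define T where "T = {0..<int g}"
  have "\<forall>t\<in>T. \<exists>z::int. \<exists>e::real. \<bar>e\<bar> < \<epsilon> \<and>
          dotZ k g \<theta> (xv k i j a t) - dotZ k g \<theta> (xv k i j 0 t) = 2 * pi * real_of_int z + e"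
    using assms(4) xv_in[of i j a k g] p pe unfolding T_def by auto
  then obtain Zf Ef where ZE: "\<forall>t\<in>T. \<bar>Ef t\<bar> < \<epsilon> \<and>
          dotZ k g \<theta> (xv k i j a t) - dotZ k g \<theta> (xv k i j 0 t) = 2 * pi * real_of_int (Zf t) + Ef t"
    by metis
  have "real g * \<theta> p = (\<Sum>t\<in>T. 2 * pi * real_of_int (Zf t) + Ef t)"
    using sum_identity[OF p, of \<theta>] pe ZE unfolding T_def[symmetric] by (auto intro: sum.cong)
  also have "\<dots> = 2 * pi * real_of_int (\<Sum>t\<in>T. Zf t) + (\<Sum>t\<in>T. Ef t)"
    by (simp add: sum.distrib sum_distrib_left)
  finally have eq: "real g * \<theta> p = 2 * pi * real_of_int (\<Sum>t\<in>T. Zf t) + (\<Sum>t\<in>T. Ef t)" .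
  have cT: "card T = g" unfolding T_def by simp
  have Tne: "T \<noteq> {}" "finite T" using assms(1) unfolding T_def by auto
  have "\<bar>\<Sum>t\<in>T. Ef t\<bar> \<le> (\<Sum>t\<in>T. \<bar>Ef t\<bar>)" by (rule sum_abs)
  also have "\<dots> < (\<Sum>t\<in>T. \<epsilon>)"
    using sum_strict_mono[OF Tne(2) Tne(1), of "\<lambda>t. \<bar>Ef t\<bar>" "\<lambda>t. \<epsilon>"] ZE by auto
  also have "\<dots> = real g * \<epsilon>" using cT by simp
  finally have bnd: "\<bar>\<Sum>t\<in>T. Ef t\<bar> < real g * \<epsilon>" .
  have gpos: "real g > 0" using assms(1) by simp
  show "\<exists>z::int. \<exists>\<epsilon>3::real. \<bar>\<epsilon>3\<bar> < 2 * \<epsilon> \<and> \<theta> p - \<epsilon>3 = 2 * pi / real g * real_of_int z"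
  proof (intro exI conjI)
    show "\<bar>(\<Sum>t\<in>T. Ef t) / real g\<bar> < 2 * \<epsilon>"
    proof -
      have "real g * \<epsilon> < 2 * \<epsilon> * real g" using gpos assms(3) by simp
      then have "\<bar>\<Sum>t\<in>T. Ef t\<bar> < 2 * \<epsilon> * real g" using bnd by linarith
      then show ?thesis using gpos by (simp add: abs_divide pos_divide_less_eq)
    qed
    show "\<theta> p - (\<Sum>t\<in>T. Ef t) / real g = 2 * pi / real g * real_of_int (\<Sum>t\<in>T. Zf t)"
      using eq gpos by (simp add: field_simps)
  qed
qed

end
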